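(* Let $V$ be a real vector space of dimension $m\ge3$ with a positive definite inner product, and let $R\neq0$ be a Jacobi-Tsankov algebraic curvature tensor on $V$. Suppose that $r(x)=m-1$ for some $x\in S(V)$. Then: \begin{enumerate} \item $J(\cdot)$ has maximal rank $m-1$ on an open dense subset of $V$; \item $R$ has constant sectional curvature $c\neq0$, i.e. $R=cR_0$ with $c\ne 0$. \end{enumerate}
   Context: An algebraic curvature tensor is $R\in\otimes^4V^*$ satisfying $R(x,y,z,w)=R(z,w,x,y)=-R(y,x,z,w)$ and $R(x,y,z,w)+R(y,z,x,w)+R(z,x,y,w)=0$. The curvature operator $\mathcal{R}(x,y)$ is defined by $\langle\mathcal{R}(x,y)z,w\rangle=R(x,y,z,w)$; the Jacobi operator is $J(x):y\mapsto\mathcal{R}(y,x)x$, and $r(x)=\operatorname{Rank}J(x)$. $S(V)$ is the unit sphere of $V$. $R$ is Jacobi-Tsankov if $x\perp y$ implies $J(x)J(y)=J(y)J(x)$. $R_0$ is the tensor with curvature operator $R_0(x,y)z=\langle y,z\rangle x-\langle x,z\rangle y$. *)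

theory Defs
  imports "HOL-Analysis.Analysis"
begin

text \<open>V is modelled by a type 'a of class euclidean_space (finite-dimensional real
inner product space, dimension DIM('a)). A 4-tensor is a function of four arguments,
linear in each.\<close>

definition alg_curv_tensor :: "('a::euclidean_space \<Rightarrow> 'a \<Rightarrow> 'a \<Rightarrow> 'a \<Rightarrow> real) \<Rightarrow> bool" where
  "alg_curv_tensor R \<longleftrightarrow>
     (\<forall>y z w. linear (\<lambda>x. R x y z w)) \<and> (\<forall>x z w. linear (\<lambda>y. R x y z w)) \<and>
     (\<forall>x y w. linear (\<lambda>z. R x y z w)) \<and> (\<forall>x y z. linear (\<lambda>w. R x y z w)) \<and>
     (\<forall>x y z w. R x y z w = R z w x y) \<and>
     (\<forall>x y z w. R x y z w = - R y x z w) \<and>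
     (\<forall>x y z w. R x y z w + R y z x w + R z x y w = 0)"

text \<open>Curvature operator: inner (curv_op R x y z) w = R x y z w.\<close>
definition curv_op :: "('a::euclidean_space \<Rightarrow> 'a \<Rightarrow> 'a \<Rightarrow> 'a \<Rightarrow> real) \<Rightarrow> 'a \<Rightarrow> 'a \<Rightarrow> 'a \<Rightarrow> 'a" where
  "curv_op R x y z = (\<Sum>b\<in>Basis. R x y z b *\<^sub>R b)"

definition jacobi_op :: "('a::euclidean_space \<Rightarrow> 'a \<Rightarrow> 'a \<Rightarrow> 'a \<Rightarrow> real) \<Rightarrow> 'a \<Rightarrow> 'a \<Rightarrow> 'a" where
  "jacobi_op R x = (\<lambda>y. curv_op R y x x)"

definition jacobi_rank :: "('a::euclidean_space \<Rightarrow> 'a \<Rightarrow> 'a \<Rightarrow> 'a \<Rightarrow> real) \<Rightarrow> 'a \<Rightarrow> nat" where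
  "jacobi_rank R x = dim (range (jacobi_op R x))"

definition jacobi_tsankov :: "('a::euclidean_space \<Rightarrow> 'a \<Rightarrow> 'a \<Rightarrow> 'a \<Rightarrow> real) \<Rightarrow> bool" where
  "jacobi_tsankov R \<longleftrightarrow>
     (\<forall>x y. inner x y = 0 \<longrightarrow> jacobi_op R x \<circ> jacobi_op R y = jacobi_op R y \<circ> jacobi_op R x)"

text \<open>R_0(x,y,z,w) = <R_0(x,y)z, w> with R_0(x,y)z = <y,z>x - <x,z>y.\<close>
definition R0 :: "'a::euclidean_space \<Rightarrow> 'a \<Rightarrow> 'a \<Rightarrow> 'a \<Rightarrow> real" where
  "R0 x y z w = inner y z * inner x w - inner x z * inner y w"

end

theory Submission
  imports Defs
begin

lemma vec_eqI_inner:
  fixes a b :: "'a::real_inner"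
  assumes "\<And>w. inner a w = inner b w"
  shows "a = b"
proof -
  have "inner (a - b) (a - b) = 0" using assms[of "a - b"] by (simp add: inner_diff_left)
  then show ?thesis by simp
qed

lemma perp_exists:
  assumes "DIM('a::euclidean_space) \<ge> 3"
  shows "\<exists>u::'a. norm u = 1 \<and> inner u a = 0 \<and> inner u b = 0"
proof -
  let ?S = "{y\<in>UNIV. \<forall>x\<in>span{a,b}. orthogonal x y}"
  have "dim ?S + dim (span{a,b}) = dim (UNIV::'a set)"
    using dim_subspace_orthogonal_to_vectors[of "span{a,b}" UNIV] by (simp add: subspace_span)
  moreover have "dim (span{a,b}) \<le> 2"
  proof -
    have "dim (span{a,b}) \<le> card {a,b}" by (rule dim_le_card) auto
    also have "\<dots> \<le> 2" by (simp add: card_insert_le_m1)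
    finally show ?thesis .
  qed
  ultimately have "dim ?S \<noteq> 0" using assms unfolding dim_UNIV by linarith
  then have "\<not> ?S \<subseteq> {0}"
  proof (rule contrapos_nn)
    assume "?S \<subseteq> {0}"
    then have "dim ?S \<le> dim {0::'a}" by (rule dim_subset)
    then show "dim ?S = 0" by simp
  qed
  then obtain y where y: "y \<in> ?S" "y \<noteq> 0" by blast
  have ya: "inner a y = 0" "inner b y = 0" using y(1) by (auto simp: orthogonal_def span_base)
  show ?thesis
    by (rule exI[of _ "y /\<^sub>R norm y"]) (use y(2) ya in \<open>simp add: inner_commute\<close>)
qed

locale act =
  fixes R :: "'a::euclidean_space \<Rightarrow> 'a \<Rightarrow> 'a \<Rightarrow> 'a \<Rightarrow> real"
  assumes ac: "alg_curv_tensor R"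
begin

lemma lin1: "linear (\<lambda>x. R x y z w)" using ac unfolding alg_curv_tensor_def by metis
lemma lin2: "linear (\<lambda>y. R x y z w)" using ac unfolding alg_curv_tensor_def by metis
lemma lin3: "linear (\<lambda>z. R x y z w)" using ac unfolding alg_curv_tensor_def by metis
lemma lin4: "linear (\<lambda>w. R x y z w)" using ac unfolding alg_curv_tensor_def by metis
lemma pair: "R x y z w = R z w x y" using ac unfolding alg_curv_tensor_def by blast
lemma anti12: "R x y z w = - R y x z w" using ac unfolding alg_curv_tensor_def by blast
lemma bianchi: "R x y z w + R y z x w + R z x y w = 0" using ac unfolding alg_curv_tensor_def by blast
lemma anti34: "R x y z w = - R x y w z"
  by (metis anti12 pair)

lemma add1: "R (a + b) y z w = R a y z w + R b y z w" using linear_add[OF lin1] by blast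
lemma add2: "R x (a + b) z w = R x a z w + R x b z w" using linear_add[OF lin2] by blast
lemma add3: "R x y (a + b) w = R x y a w + R x y b w" using linear_add[OF lin3] by blast
lemma add4: "R x y z (a + b) = R x y z a + R x y z b" using linear_add[OF lin4] by blast
lemma sc1: "R (c *\<^sub>R a) y z w = c * R a y z w" using linear_scale[OF lin1] by simp
lemma sc2: "R x (c *\<^sub>R a) z w = c * R x a z w" using linear_scale[OF lin2] by simp
lemma sc3: "R x y (c *\<^sub>R a) w = c * R x y a w" using linear_scale[OF lin3] by simp
lemma sc4: "R x y z (c *\<^sub>R a) = c * R x y z a" using linear_scale[OF lin4] by simp
lemma diff1: "R (a - b) y z w = R a y z w - R b y z w" using linear_diff[OF lin1] by blast
lemma diff2: "R x (a - b) z w = R x a z w - R x b z w" using linear_diff[OF lin2] by blast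
lemma diff3: "R x y (a - b) w = R x y a w - R x y b w" using linear_diff[OF lin3] by blast
lemma diff4: "R x y z (a - b) = R x y z a - R x y z b" using linear_diff[OF lin4] by blast
lemma zero1: "R 0 y z w = 0" using linear_0[OF lin1] by blast
lemma zero2: "R x 0 z w = 0" using linear_0[OF lin2] by blast
lemma zero3: "R x y 0 w = 0" using linear_0[OF lin3] by blast
lemma zero4: "R x y z 0 = 0" using linear_0[OF lin4] by blast

lemmas Rsimps = add1 add2 add3 add4 sc1 sc2 sc3 sc4 diff1 diff2 diff3 diff4 zero1 zero2 zero3 zero4

lemma inner_curv: "inner (curv_op R x y z) w = R x y z w"
proof -
  have "R x y z w = R x y z (\<Sum>b\<in>Basis. (w \<bullet> b) *\<^sub>R b)" by (simp add: euclidean_representation)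
  also have "\<dots> = (\<Sum>b\<in>Basis. (w \<bullet> b) * R x y z b)"
    by (simp add: linear_sum[OF lin4] o_def sc4)
  finally show ?thesis unfolding curv_op_def
    by (simp add: inner_sum_right inner_commute mult.commute)
qed

lemma inner_J: "inner (jacobi_op R x y) z = R y x x z"
  by (simp add: jacobi_op_def inner_curv)

lemma J_eqI: "(\<And>z. R y x x z = inner v z) \<Longrightarrow> jacobi_op R x y = v"
  by (rule vec_eqI_inner) (simp add: inner_J)

lemma J_add: "jacobi_op R x (a + b) = jacobi_op R x a + jacobi_op R x b"
  by (rule vec_eqI_inner) (simp add: inner_J inner_add_left add1)
lemma J_scale: "jacobi_op R x (c *\<^sub>R a) = c *\<^sub>R jacobi_op R x a"
  by (rule vec_eqI_inner) (simp add: inner_J sc1)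
lemma J_diff: "jacobi_op R x (a - b) = jacobi_op R x a - jacobi_op R x b"
  by (rule vec_eqI_inner) (simp add: inner_J inner_diff_left diff1)
lemma J_zero: "jacobi_op R x 0 = 0"
  by (rule vec_eqI_inner) (simp add: inner_J zero1)
lemma J_self: "jacobi_op R x x = 0"
  by (rule vec_eqI_inner) (use anti12[of x x x] in \<open>simp add: inner_J\<close>)
lemma J_sym: "inner (jacobi_op R x y) z = inner y (jacobi_op R x z)"
  using pair[of y x x z] anti12[of x z y x] anti34[of z x y x] by (simp add: inner_J inner_commute[of y])
lemma J_linear: "linear (jacobi_op R x)"
  by (rule linearI) (simp_all add: J_add J_scale)

lemma eigen_exists:
  assumes n1: "norm n = 1" and D: "DIM('a) \<ge> 3"
  shows "\<exists>v l. norm v = 1 \<and> inner v n = 0 \<and> jacobi_op R n v = l *\<^sub>R v"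
proof -
  let ?J = "jacobi_op R n"
  let ?q = "\<lambda>y. inner (?J y) y"
  let ?S = "sphere 0 1 \<inter> {y. n \<bullet> y = 0}"
  have cS: "compact ?S" by (intro compact_Int_closed compact_sphere closed_hyperplane)
  have neS: "?S \<noteq> {}" using perp_exists[OF D, of n n] by (auto simp: inner_commute)
  have bl: "bounded_linear ?J" using J_linear linear_conv_bounded_linear by blast
  have cq: "continuous_on ?S ?q"
    by (intro continuous_on_inner linear_continuous_on bl continuous_on_id)
  obtain v where vS: "v \<in> ?S" and vmax: "\<And>y. y \<in> ?S \<Longrightarrow> ?q y \<le> ?q v"
    using continuous_attains_sup[OF cS neS cq] by blast
  define l where "l = ?q v"
  have v1: "norm v = 1" and vn: "inner v n = 0" using vS by (auto simp: inner_commute)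
  have vv: "inner v v = 1" using v1 by (simp add: dot_square_norm)
  have nn: "inner n n = 1" using n1 by (simp add: dot_square_norm)
  have bound: "?q y \<le> l * inner y y" if yn: "inner y n = 0" for y
  proof (cases "y = 0")
    case True then show ?thesis by (simp add: J_zero)
  next
    case False
    let ?y = "y /\<^sub>R norm y"
    have "?y \<in> ?S" using False yn by (simp add: inner_commute)
    then have "?q ?y \<le> l" using vmax l_def by blast
    moreover have "?q ?y = ?q y / (norm y)^2" by (simp add: J_scale power2_eq_square field_simps)
    ultimately have "?q y / (norm y)^2 \<le> l" by simp
    moreover have "(norm y)^2 > 0" using False by simp
    ultimately have "?q y \<le> l * (norm y)^2" by (simp add: divide_le_eq)
    then show ?thesis by (simp add: dot_square_norm)
  qed
  define w where "w = ?J v - l *\<^sub>R v"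
  have wn: "inner w n = 0" unfolding w_def
    by (simp add: inner_diff_left J_sym J_self vn)
  have wv: "inner w v = 0" unfolding w_def by (simp add: inner_diff_left l_def vv)
  have "w = 0"
  proof (rule ccontr)
    assume "w \<noteq> 0"
    define a where "a = inner w w"
    have a0: "a > 0" unfolding a_def using \<open>w \<noteq> 0\<close> by simp
    have e0: "inner v (?J v) = l" unfolding l_def by (rule inner_commute)
    have e1: "inner (?J v) w = inner (?J v) (?J v) - l * l" unfolding w_def
      by (simp add: inner_diff_right l_def)
    have e2: "inner w w = inner (?J v) (?J v) - l * l" unfolding w_def
      by (simp add: inner_diff_left inner_diff_right e0 vv) (simp add: l_def)
    have Jvw: "inner (?J v) w = a" unfolding a_def using e1 e2 by simp
    define C where "C = ?q w"
    define t where "t = a / (\<bar>C - l * a\<bar> + 1)"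
    have t0: "t > 0" unfolding t_def using a0 by simp
    have ytn: "inner (v + t *\<^sub>R w) n = 0" using vn wn by (simp add: inner_add_left)
    have "?q (v + t *\<^sub>R w) = l + 2 * t * a + t * t * C"
    proof -
      have "inner (?J w) v = a" using Jvw J_sym[of n w v] by (simp add: inner_commute)
      then show ?thesis unfolding C_def l_def
        by (simp add: J_add J_scale inner_add_left inner_add_right Jvw algebra_simps)
    qed
    moreover have "inner (v + t *\<^sub>R w) (v + t *\<^sub>R w) = 1 + t * t * a"
      unfolding a_def using wv vv by (simp add: inner_add_left inner_add_right inner_commute[of v w])
    ultimately have "l + 2 * t * a + t * t * C \<le> l * (1 + t * t * a)"
      using bound[OF ytn] by simp
    then have "t * (2 * a + t * (C - l * a)) \<le> 0" by (simp add: algebra_simps)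
    then have le: "2 * a + t * (C - l * a) \<le> 0" using t0 by (simp add: mult_le_0_iff)
    have "t * \<bar>C - l * a\<bar> < a"
    proof -
      have "t * \<bar>C - l * a\<bar> = a * (\<bar>C - l * a\<bar> / (\<bar>C - l * a\<bar> + 1))" unfolding t_def by simp
      also have "\<dots> < a * 1" using a0 by (intro mult_strict_left_mono) auto
      finally show ?thesis by simp
    qed
    moreover have "- (t * \<bar>C - l * a\<bar>) \<le> t * (C - l * a)"
      using t0 by (metis abs_ge_minus_self abs_mult abs_of_pos minus_le_iff)
    ultimately show False using le a0 by linarith
  qed
  then show ?thesis using v1 vn unfolding w_def by auto
qed

end

locale jt = act +
  assumes jt: "jacobi_tsankov R"
begin

lemma comm: "inner x y = 0 \<Longrightarrow> jacobi_op R x (jacobi_op R y z) = jacobi_op R y (jacobi_op R x z)"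
  using jt unfolding jacobi_tsankov_def by (metis comp_apply)

lemma keyE:
  assumes n1: "norm n = 1" and inj: "\<And>y. inner y n = 0 \<Longrightarrow> jacobi_op R n y = 0 \<Longrightarrow> y = 0"
    and v1: "norm v = 1" and vn: "inner v n = 0" and ev: "jacobi_op R n v = l *\<^sub>R v"
  shows "l \<noteq> 0 \<and> (\<forall>y. jacobi_op R v y = l *\<^sub>R (y - inner y v *\<^sub>R v))"
proof -
  let ?J = "jacobi_op R"
  have nn: "inner n n = 1" using n1 by (simp add: dot_square_norm)
  have vv: "inner v v = 1" using v1 by (simp add: dot_square_norm)
  have c: "?J y n = R n y y n *\<^sub>R n" if yn: "inner y n = 0" for y
  proof -
    define p where "p = ?J y n - inner (?J y n) n *\<^sub>R n"
    have pn: "inner p n = 0" unfolding p_def by (simp add: inner_diff_left nn)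
    have "?J n (?J y n) = 0"
      using comm[of n y n] yn by (simp add: inner_commute J_self J_zero)
    then have "?J n p = 0" unfolding p_def by (simp add: J_diff J_scale J_self)
    then have "p = 0" using inj pn by blast
    then show ?thesis unfolding p_def by (simp add: inner_J)
  qed
  have d: "R n y y z = 0" if "inner y n = 0" "inner z n = 0" for y z
  proof -
    have "R n y y z = inner (?J y n) z" by (simp add: inner_J)
    also have "\<dots> = 0" using c[OF that(1)] that(2) by (simp add: inner_commute)
    finally show ?thesis .
  qed
  have P: "R n y w z + R n w y z = 0" if "inner y n = 0" "inner w n = 0" "inner z n = 0" for y w z
  proof -
    have "R n (y + w) (y + w) z = 0" using d[of "y + w" z] that by (simp add: inner_add_left)
    then show ?thesis using d[of y z] d[of w z] that by (simp add: Rsimps)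
  qed
  have e: "R n y w z = 0" if "inner y n = 0" "inner w n = 0" "inner z n = 0" for y w z
  proof -
    have b: "R n y w z + R y w n z + R w n y z = 0" by (rule bianchi)
    have "R y w n z = R n z y w" by (rule pair)
    moreover have "R w n y z = - R n w y z" by (rule anti12)
    moreover have "R n z y w + R n y z w = 0" using P[of z y w] that by simp
    moreover have "R n y z w = - R n y w z" by (rule anti34)
    ultimately show ?thesis using b P[of y w z] that by linarith
  qed
  have Jvn: "?J v n = l *\<^sub>R n"
  proof -
    have "R n v v n = inner (?J n v) v" by (simp add: inner_J pair)
    also have "\<dots> = l" using ev vv by simp
    finally show ?thesis using c[OF vn] by simp
  qed
  have f: "?J v (?J n u) = l *\<^sub>R ?J n u" if un: "inner u n = 0" and uv: "inner u v = 0" for u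
  proof -
    define a where "a = R n u u n"
    have Jnu: "?J (n + u) n = a *\<^sub>R n - ?J n u"
    proof (rule J_eqI)
      fix z
      have "R n u u z = a * inner n z"
        using c[OF un] unfolding a_def by (metis inner_J inner_scaleR_left)
      moreover have "R n n u z = 0" "R n n n z = 0" using anti12[of n n] by auto
      moreover have "R n u n z = - R u n n z" by (rule anti12)
      ultimately show "R n (n + u) (n + u) z = inner (a *\<^sub>R n - ?J n u) z"
        by (simp add: Rsimps inner_diff_left inner_J)
    qed
    have "inner (n + u) v = 0" using un uv vn by (simp add: inner_add_left inner_add_right inner_commute)
    then have "?J (n + u) (?J v n) = ?J v (?J (n + u) n)" by (rule comm)
    then have "l *\<^sub>R (a *\<^sub>R n - ?J n u) = a *\<^sub>R (l *\<^sub>R n) - ?J v (?J n u)"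
      by (simp add: Jvn Jnu J_scale J_diff)
    then show ?thesis by (simp add: algebra_simps)
  qed
  have l0: "l \<noteq> 0"
  proof
    assume "l = 0"
    then have "v = 0" using inj[OF vn] ev by simp
    then show False using v1 by simp
  qed
  define f where "f y = ?J n y + inner y n *\<^sub>R n" for y
  have linf: "linear f" unfolding f_def
    by (rule linearI) (simp_all add: J_add J_scale inner_add_left algebra_simps)
  have injf: "inj f"
  proof -
    have "x = 0" if "f x = 0" for x
    proof -
      have "inner (f x) n = inner x n"
        unfolding f_def by (simp add: inner_add_left J_sym J_self nn)
      then have xn: "inner x n = 0" using that by simp
      then have "?J n x = 0" using that unfolding f_def by simp
      then show ?thesis using inj xn by blast
    qed
    then show ?thesis using linear_injective_0[OF linf] by blast
  qed
  have surjf: "surj f" using linear_injective_imp_surjective[OF linf injf] by simp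
  have g: "\<exists>u. inner u n = 0 \<and> ?J n u = y" if "inner y n = 0" for y
  proof -
    obtain u where u: "f u = y" using surjf by (metis surjD)
    have "inner (f u) n = inner u n"
      unfolding f_def by (simp add: inner_add_left J_sym J_self nn)
    then have "inner u n = 0" using u that by simp
    then show ?thesis using u unfolding f_def by auto
  qed
  have i: "?J v y = l *\<^sub>R y" if yn: "inner y n = 0" and yv: "inner y v = 0" for y
  proof -
    obtain u where u: "inner u n = 0" "?J n u = y" using g yn by blast
    have "l * inner u v = inner u (?J n v)" using ev by simp
    also have "\<dots> = inner y v" using u(2) J_sym[of n u v] by simp
    finally have "inner u v = 0" using yv l0 by simp
    then show ?thesis using f[OF u(1)] u(2) by simp
  qed
  have j: "?J v y = l *\<^sub>R (y - inner y v *\<^sub>R v)" for y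
  proof -
    define y' where "y' = y - inner y n *\<^sub>R n - inner y v *\<^sub>R v"
    have y'n: "inner y' n = 0" unfolding y'_def
      by (simp add: inner_diff_left nn vn)
    have y'v: "inner y' v = 0" unfolding y'_def
      by (simp add: inner_diff_left vv vn inner_commute[of n v])
    have "y = y' + inner y n *\<^sub>R n + inner y v *\<^sub>R v" unfolding y'_def by simp
    then have "?J v y = ?J v y' + inner y n *\<^sub>R ?J v n + inner y v *\<^sub>R ?J v v"
      by (metis J_add J_scale)
    also have "\<dots> = l *\<^sub>R y' + inner y n *\<^sub>R (l *\<^sub>R n)"
      using i[OF y'n y'v] Jvn by (simp add: J_self)
    also have "\<dots> = l *\<^sub>R (y - inner y v *\<^sub>R v)" unfolding y'_def by (simp add: algebra_simps)
    finally show ?thesis .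
  qed
  show ?thesis using l0 j by blast
qed

lemma rank_inj:
  assumes D: "DIM('a) \<ge> 3" and n1: "norm n = 1" and rk: "jacobi_rank R n = DIM('a) - 1"
    and yn: "inner y n = 0" and Jy: "jacobi_op R n y = 0"
  shows "y = 0"
proof (rule ccontr)
  assume y0: "y \<noteq> 0"
  let ?S = "{z\<in>UNIV. \<forall>x\<in>span{n,y}. orthogonal x z}"
  have eq: "dim ?S + dim (span{n,y}) = dim (UNIV::'a set)"
    using dim_subspace_orthogonal_to_vectors[of "span{n,y}" UNIV] by (simp add: subspace_span)
  have nn: "inner n n = 1" using n1 by (simp add: dot_square_norm)
  have "n \<notin> span {y}"
  proof
    assume "n \<in> span {y}"
    then obtain k where "n = k *\<^sub>R y" by (auto simp: span_singleton)
    then have "inner n n = k * inner y n" by simp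
    then show False using nn yn by simp
  qed
  then have d2: "dim (span{n,y}) = 2" using y0 by (simp add: dim_span dim_insert)
  have "range (jacobi_op R n) \<subseteq> ?S"
  proof (rule subsetI)
    fix z assume "z \<in> range (jacobi_op R n)"
    then obtain w where zw: "z = jacobi_op R n w" by blast
    have "orthogonal x (jacobi_op R n w)" if x: "x \<in> span {n, y}" for x
    proof -
    have "orthogonal (jacobi_op R n w) x"
    proof (rule orthogonal_to_span[OF x])
      fix u assume "u \<in> {n, y}"
      then show "orthogonal (jacobi_op R n w) u"
        using Jy by (auto simp: orthogonal_def J_sym J_self)
    qed
    then show "orthogonal x (jacobi_op R n w)" by (simp add: orthogonal_commute)
    qed
    then show "z \<in> ?S" using zw by blast
  qed
  then have "dim (range (jacobi_op R n)) \<le> dim ?S" by (rule dim_subset)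
  then show False using eq d2 rk D unfolding jacobi_rank_def dim_UNIV by linarith
qed

lemma propagate:
  assumes n1: "norm n = 1" and l0: "l \<noteq> 0" and Jn: "\<And>y. jacobi_op R n y = l *\<^sub>R (y - inner y n *\<^sub>R n)"
    and v1: "norm v = 1" and vn: "inner v n = 0"
  shows "\<forall>y. jacobi_op R v y = l *\<^sub>R (y - inner y v *\<^sub>R v)"
proof -
  have inj: "y = 0" if "inner y n = 0" "jacobi_op R n y = 0" for y
    using that Jn[of y] l0 by simp
  have "jacobi_op R n v = l *\<^sub>R v" using Jn[of v] vn by simp
  then show ?thesis using keyE[OF n1 inj v1 vn] by blast
qed

lemma const_curv:
  assumes D: "DIM('a) \<ge> 3" and ex: "\<exists>x. norm x = 1 \<and> jacobi_rank R x = DIM('a) - 1"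
  shows "\<exists>l. l \<noteq> 0 \<and> (\<forall>x y. jacobi_op R x y = l *\<^sub>R (inner x x *\<^sub>R y - inner y x *\<^sub>R x))"
proof -
  obtain n where n1: "norm n = 1" and rk: "jacobi_rank R n = DIM('a) - 1" using ex by blast
  obtain v l where v1: "norm v = 1" and vn: "inner v n = 0" and ev: "jacobi_op R n v = l *\<^sub>R v"
    using eigen_exists[OF n1 D] by blast
  have inj: "\<And>y. inner y n = 0 \<Longrightarrow> jacobi_op R n y = 0 \<Longrightarrow> y = 0"
    using rank_inj[OF D n1 rk] by blast
  have l0: "l \<noteq> 0" and Jv: "\<And>y. jacobi_op R v y = l *\<^sub>R (y - inner y v *\<^sub>R v)"
    using keyE[OF n1 inj v1 vn ev] by blast+
  have unit: "jacobi_op R x y = l *\<^sub>R (y - inner y x *\<^sub>R x)" if x1: "norm x = 1" for x y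
  proof -
    obtain u where u1: "norm u = 1" and uv: "inner u v = 0" and ux: "inner u x = 0"
      using perp_exists[OF D, of v x] by blast
    have Ju: "\<And>y. jacobi_op R u y = l *\<^sub>R (y - inner y u *\<^sub>R u)"
      using propagate[OF v1 l0 Jv u1 uv] by blast
    have "inner x u = 0" using ux by (simp add: inner_commute)
    then show ?thesis using propagate[OF u1 l0 Ju x1] by blast
  qed
  have "jacobi_op R x y = l *\<^sub>R (inner x x *\<^sub>R y - inner y x *\<^sub>R x)" for x y
  proof (cases "x = 0")
    case True
    have "jacobi_op R 0 y = 0" by (rule vec_eqI_inner) (simp add: inner_J zero2)
    then show ?thesis using True by simp
  next
    case False
    define u where "u = x /\<^sub>R norm x"
    have u1: "norm u = 1" using False unfolding u_def by simp
    have xu: "x = norm x *\<^sub>R u" using False unfolding u_def by simp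
    have "jacobi_op R x y = (norm x * norm x) *\<^sub>R jacobi_op R u y"
      by (rule vec_eqI_inner, subst xu) (simp add: inner_J sc2 sc3)
    also have "\<dots> = l *\<^sub>R (inner x x *\<^sub>R y - inner y x *\<^sub>R x)"
    proof -
      have xx: "inner x x = norm x * norm x" by (simp add: dot_square_norm power2_eq_square)
      have yx: "(norm x * norm x) *\<^sub>R ((y \<bullet> u) *\<^sub>R u) = (y \<bullet> x) *\<^sub>R x"
        unfolding u_def using False by (simp add: inner_commute[of y] field_simps)
      show ?thesis unfolding unit[OF u1] xx using yx by (simp add: algebra_simps) (metis scaleR_scaleR)
    qed
    finally show ?thesis .
  qed
  then show ?thesis using l0 by blast
qed

lemma R_eq:
  assumes J: "\<forall>x y. jacobi_op R x y = l *\<^sub>R (inner x x *\<^sub>R y - inner y x *\<^sub>R x)"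
  shows "R = (\<lambda>x y z w. l * R0 x y z w)"
proof -
  have h: "R y x x z = l * R0 y x x z" for y x z
  proof -
    have "R y x x z = inner (jacobi_op R x y) z" by (simp add: inner_J)
    also have "\<dots> = inner (l *\<^sub>R (inner x x *\<^sub>R y - inner y x *\<^sub>R x)) z" by (simp only: J[rule_format])
    also have "\<dots> = l * R0 y x x z" by (simp add: R0_def inner_diff_left algebra_simps)
    finally show ?thesis .
  qed
  define D where "D a b c d = R a b c d - l * R0 a b c d" for a b c d
  have Dpol: "D y x w z + D y w x z = 0" for y x w z
  proof -
    have "R y (x + w) (x + w) z = l * R0 y (x + w) (x + w) z" by (rule h)
    then show ?thesis using h[of y x z] h[of y w z] unfolding D_def
      by (simp add: Rsimps R0_def inner_add_left inner_add_right algebra_simps)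
  qed
  have Danti: "D a b c d = - D b a c d" for a b c d
    unfolding D_def R0_def using anti12[of a b c d] by (simp add: algebra_simps)
  have Dbian: "D a b c d + D b c a d + D c a b d = 0" for a b c d
    unfolding D_def R0_def using bianchi[of a b c d] by (simp add: algebra_simps inner_commute)
  have "D y x w z = 0" for y x w z
    using Dbian[of y x w z] Danti[of x w y z] Dpol[of w x y z] Danti[of w y x z] Dpol[of y x w z]
    by linarith
  then show ?thesis unfolding D_def by (intro ext) simp
qed

lemma rank_full:
  assumes l0: "l \<noteq> 0" and J: "\<forall>x y. jacobi_op R x y = l *\<^sub>R (inner x x *\<^sub>R y - inner y x *\<^sub>R x)"
    and x0: "x \<noteq> 0"
  shows "jacobi_rank R x = DIM('a) - 1"
proof -
  have "range (jacobi_op R x) = {z. x \<bullet> z = 0}"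
  proof (intro subset_antisym subsetI)
    fix z assume "z \<in> range (jacobi_op R x)"
    then obtain y where "z = jacobi_op R x y" by blast
    then show "z \<in> {z. x \<bullet> z = 0}" using J by (simp add: inner_diff_right inner_commute)
  next
    fix z assume "z \<in> {z. x \<bullet> z = 0}"
    then have xz: "inner x z = 0" by simp
    have xx: "inner x x \<noteq> 0" using x0 by simp
    let ?y = "(1 / (l * inner x x)) *\<^sub>R z"
    have "jacobi_op R x ?y = z" using J xz xx l0 by (simp add: inner_commute)
    then show "z \<in> range (jacobi_op R x)" by (metis rangeI)
  qed
  then show ?thesis unfolding jacobi_rank_def using dim_hyperplane[OF x0] by simp
qed

end

theorem lemma2p1:
  fixes R :: "'a::euclidean_space \<Rightarrow> 'a \<Rightarrow> 'a \<Rightarrow> 'a \<Rightarrow> real"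
  assumes "DIM('a) \<ge> 3"
    and "alg_curv_tensor R"
    and "R \<noteq> (\<lambda>x y z w. 0)"
    and "jacobi_tsankov R"
    and "\<exists>x. norm x = 1 \<and> jacobi_rank R x = DIM('a) - 1"
  shows "(\<exists>U. open U \<and> closure U = UNIV \<and> (\<forall>x\<in>U. jacobi_rank R x = DIM('a) - 1))
       \<and> (\<exists>c. c \<noteq> 0 \<and> R = (\<lambda>x y z w. c * R0 x y z w))"
proof -
  interpret jt R using assms(2,4) by (unfold_locales)
  obtain l where l0: "l \<noteq> 0"
    and J: "\<forall>x y. jacobi_op R x y = l *\<^sub>R (inner x x *\<^sub>R y - inner y x *\<^sub>R x)"
    using const_curv[OF assms(1,5)] by blast
  have "open (- {0::'a})" by (simp add: open_Compl)
  moreover have "closure (- {0::'a}) = UNIV" by (simp add: closure_complement)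
  moreover have "\<forall>x\<in>- {0}. jacobi_rank R x = DIM('a) - 1" using rank_full[OF l0 J] by blast
  ultimately show ?thesis using R_eq[OF J] l0 by blast
qed

end
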